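(* Let $a,b\in C\ell_{1,2}$. If $\mathrm{Cim}(a)\neq\mathrm{Cim}(b)$, $\mathrm{Cim}(a)\neq 0$, $\mathrm{Cim}(b)\neq 0$ and $P(\mathrm{Cim}(a))=P(\mathrm{Cim}(b))=0$, then at least one of the four elements $\mathrm{Cim}(a)e_t+e_t\,\mathrm{Cim}(b)$, $t=0,1,2,3$, is invertible.
   Context: $C\ell_{1,2}$ is the real Clifford algebra generated by $i_1,i_2,i_3$ with $i_1^2=1$, $i_2^2=i_3^2=-1$ and $i_ti_m=-i_mi_t$ for $t\neq m$, with real basis $e_0=1$, $e_1=i_1$, $e_2=i_2$, $e_3=i_1i_2$, $e_4=i_3$, $e_5=i_1i_3$, $e_6=i_2i_3$, $e_7=i_1i_2i_3$. For $a=\sum_{t=0}^7 a_te_t$: $\mathrm{Cim}(a)=a_1e_1+a_2e_2+a_3e_3+a_4e_4+a_5e_5+a_6e_6$; $N(a)=a_0^2-a_1^2+a_2^2-a_3^2+a_4^2-a_5^2+a_6^2-a_7^2$; $T(a)=a_0a_7+a_2a_5-a_1a_6-a_3a_4$; $P(a)=N(a)^2+4T(a)^2$. An element $c$ is invertible if there is $d$ with $cd=dc=1$; this holds iff $P(c)\neq 0$. *)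

theory Defs
  imports Complex_Main
begin

text \<open>Elements of the real Clifford algebra Cl_{1,2}, written in the real basis
e_0,...,e_7 (e_0 = 1, e_1 = i1, e_2 = i2, e_3 = i1 i2, e_4 = i3, e_5 = i1 i3,
e_6 = i2 i3, e_7 = i1 i2 i3). Index k encodes the generators as bits
(bit 0: i1, bit 1: i2, bit 2: i3).\<close>

datatype cl12 = CL real real real real real real real real

fun cf :: "cl12 \<Rightarrow> nat \<Rightarrow> real" where
  "cf (CL a0 a1 a2 a3 a4 a5 a6 a7) k =
     (if k = 0 then a0 else if k = 1 then a1 else if k = 2 then a2 else if k = 3 then a3
      else if k = 4 then a4 else if k = 5 then a5 else if k = 6 then a6
      else if k = 7 then a7 else 0)"

definition cl_of :: "(nat \<Rightarrow> real) \<Rightarrow> cl12" where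
  "cl_of f = CL (f 0) (f 1) (f 2) (f 3) (f 4) (f 5) (f 6) (f 7)"

text \<open>Squares of generators: i1^2 = 1, i2^2 = i3^2 = -1 (generator j has index j, 0-based).\<close>
definition gen_sq :: "nat \<Rightarrow> real" where
  "gen_sq j = (if j = 0 then 1 else -1)"

text \<open>Sign in e_s e_t = cl_sign s t * e_(s xor t): anticommute the generators of t past
the larger generators of s, then square common generators.\<close>
definition cl_sign :: "nat \<Rightarrow> nat \<Rightarrow> real" where
  "cl_sign s t =
     (-1) ^ (\<Sum>i<3. \<Sum>j<3. if bit s i \<and> bit t j \<and> j < i then 1 else 0)
     * (\<Prod>k<3. if bit s k \<and> bit t k then gen_sq k else 1)"

definition cl_mult :: "cl12 \<Rightarrow> cl12 \<Rightarrow> cl12" where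
  "cl_mult a b = cl_of (\<lambda>k. \<Sum>s<8. \<Sum>t<8.
       if xor s t = k then cl_sign s t * cf a s * cf b t else 0)"

definition cl_add :: "cl12 \<Rightarrow> cl12 \<Rightarrow> cl12" where
  "cl_add a b = cl_of (\<lambda>k. cf a k + cf b k)"

definition cl_zero :: cl12 where "cl_zero = CL 0 0 0 0 0 0 0 0"
definition cl_one :: cl12 where "cl_one = CL 1 0 0 0 0 0 0 0"

definition cl_basis :: "nat \<Rightarrow> cl12" where
  "cl_basis t = cl_of (\<lambda>k. if k = t then 1 else 0)"

definition Cim :: "cl12 \<Rightarrow> cl12" where
  "Cim a = CL 0 (cf a 1) (cf a 2) (cf a 3) (cf a 4) (cf a 5) (cf a 6) 0"

definition N :: "cl12 \<Rightarrow> real" where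
  "N a = (cf a 0)^2 - (cf a 1)^2 + (cf a 2)^2 - (cf a 3)^2 + (cf a 4)^2 - (cf a 5)^2
         + (cf a 6)^2 - (cf a 7)^2"

definition T :: "cl12 \<Rightarrow> real" where
  "T a = cf a 0 * cf a 7 + cf a 2 * cf a 5 - cf a 1 * cf a 6 - cf a 3 * cf a 4"

definition P :: "cl12 \<Rightarrow> real" where
  "P a = (N a)^2 + 4 * (T a)^2"

definition cl_invertible :: "cl12 \<Rightarrow> bool" where
  "cl_invertible c \<longleftrightarrow> (\<exists>d. cl_mult c d = cl_one \<and> cl_mult d c = cl_one)"

end

theory Submission
  imports Defs
begin
lemma set8: "{..<8::nat} = {0,1,2,3,4,5,6,7}" by auto
lemma set3: "{..<3::nat} = {0,1,2}" by auto
lemma mult_CL: "cl_mult (CL a0 a1 a2 a3 a4 a5 a6 a7) (CL b0 b1 b2 b3 b4 b5 b6 b7) = CL (a0*b0 + a1*b1 - a2*b2 + a3*b3 - a4*b4 + a5*b5 - a6*b6 - a7*b7) (a0*b1 + a1*b0 + a2*b3 - a3*b2 + a4*b5 - a5*b4 - a6*b7 - a7*b6) (a0*b2 + a1*b3 + a2*b0 - a3*b1 + a4*b6 - a5*b7 - a6*b4 - a7*b5) (a0*b3 + a1*b2 - a2*b1 + a3*b0 - a4*b7 + a5*b6 - a6*b5 - a7*b4) (a0*b4 + a1*b5 - a2*b6 + a3*b7 + a4*b0 - a5*b1 + a6*b2 + a7*b3) (a0*b5 + a1*b4 + a2*b7 - a3*b6 - a4*b1 + a5*b0 + a6*b3 +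 a7*b2) (a0*b6 + a1*b7 + a2*b4 - a3*b5 - a4*b2 + a5*b3 + a6*b0 + a7*b1) (a0*b7 + a1*b6 - a2*b5 + a3*b4 + a4*b3 - a5*b2 + a6*b1 + a7*b0)"
  unfolding cl_mult_def cl_of_def cl_sign_def gen_sq_def
  by (simp add: set8 set3 bit_0 algebra_simps)

lemma qr: "cl_mult (CL c0 c1 c2 c3 c4 c5 c6 c7) (CL (c0^3 - c0*c1^2 + c0*c2^2 - c0*c3^2 + c0*c4^2 - c0*c5^2 + c0*c6^2 + c0*c7^2 - 2*c1*c6*c7 + 2*c2*c5*c7 - 2*c3*c4*c7) (0 - c0^2*c1 - 2*c0*c6*c7 + c1^3 - c1*c2^2 + c1*c3^2 - c1*c4^2 + c1*c5^2 + c1*c6^2 + c1*c7^2 - 2*c2*c5*c6 + 2*c3*c4*c6) (0 - c0^2*c2 - 2*c0*c5*c7 + c1^2*c2 + 2*c1*c5*c6 - c2^3 + c2*c3^2 - c2*c4^2 - c2*c5^2 - c2*c6^2 + c2*c7^2 + 2*c3*c4*c5) (0 - c0^2*c3 - 2*c0*c4*c7 + c1^2*c3 + 2*c1*c4*c6 - c2^2*c3 - 2*c2*c4*c5 + c3^3 + c3*c4^2 + c3*c5^2 - c3*c6^2 + c3*c7^2) (0 - c0^2*c4 + 2*c0*c3*c7 + c1^2*c4 - 2*c1*c3*c6 - c2^2*c4 + 2*c2*c3*c5 - c3^2*c4 - c4^3 + c4*c5^2 - c4*c6^2 + c4*c7^2) (0 - c0^2*c5 + 2*c0*c2*c7 +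 c1^2*c5 - 2*c1*c2*c6 + c2^2*c5 - 2*c2*c3*c4 + c3^2*c5 - c4^2*c5 + c5^3 - c5*c6^2 + c5*c7^2) (0 - c0^2*c6 + 2*c0*c1*c7 - c1^2*c6 + 2*c1*c2*c5 - 2*c1*c3*c4 - c2^2*c6 + c3^2*c6 - c4^2*c6 + c5^2*c6 - c6^3 + c6*c7^2) (0 - c0^2*c7 + 2*c0*c1*c6 - 2*c0*c2*c5 + 2*c0*c3*c4 - c1^2*c7 + c2^2*c7 - c3^2*c7 + c4^2*c7 - c5^2*c7 + c6^2*c7 - c7^3)) = CL (P (CL c0 c1 c2 c3 c4 c5 c6 c7)) 0 0 0 0 0 0 0"
  unfolding mult_CL P_def N_def T_def by (simp add: algebra_simps power2_eq_square power3_eq_cube)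
lemma ql: "cl_mult (CL (c0^3 - c0*c1^2 + c0*c2^2 - c0*c3^2 + c0*c4^2 - c0*c5^2 + c0*c6^2 + c0*c7^2 - 2*c1*c6*c7 + 2*c2*c5*c7 - 2*c3*c4*c7) (0 - c0^2*c1 - 2*c0*c6*c7 + c1^3 - c1*c2^2 + c1*c3^2 - c1*c4^2 + c1*c5^2 + c1*c6^2 + c1*c7^2 - 2*c2*c5*c6 + 2*c3*c4*c6) (0 - c0^2*c2 - 2*c0*c5*c7 + c1^2*c2 + 2*c1*c5*c6 - c2^3 + c2*c3^2 - c2*c4^2 - c2*c5^2 - c2*c6^2 + c2*c7^2 + 2*c3*c4*c5) (0 - c0^2*c3 - 2*c0*c4*c7 + c1^2*c3 + 2*c1*c4*c6 - c2^2*c3 - 2*c2*c4*c5 + c3^3 + c3*c4^2 + c3*c5^2 - c3*c6^2 + c3*c7^2) (0 - c0^2*c4 + 2*c0*c3*c7 + c1^2*c4 - 2*c1*c3*c6 - c2^2*c4 + 2*c2*c3*c5 - c3^2*c4 - c4^3 + c4*c5^2 - c4*c6^2 + c4*c7^2) (0 - c0^2*c5 + 2*c0*c2*c7 + c1^2*c5 - 2*c1*c2*c6 + c2^2*c5 - 2*c2*c3*c4 + c3^2*c5 - c4^2*c5 + c5^3 - c5*c6^2 + c5*c7^2) (0 - c0^2*c6 + 2*c0*c1*c7 - c1^2*c6 + 2*c1*c2*c5 - 2*c1*c3*c4 - c2^2*c6 + c3^2*c6 - c4^2*c6 + c5^2*c6 - c6^3 + c6*c7^2) (0 - c0^2*c7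 + 2*c0*c1*c6 - 2*c0*c2*c5 + 2*c0*c3*c4 - c1^2*c7 + c2^2*c7 - c3^2*c7 + c4^2*c7 - c5^2*c7 + c6^2*c7 - c7^3)) (CL c0 c1 c2 c3 c4 c5 c6 c7) = CL (P (CL c0 c1 c2 c3 c4 c5 c6 c7)) 0 0 0 0 0 0 0"
  unfolding mult_CL P_def N_def T_def by (simp add: algebra_simps power2_eq_square power3_eq_cube)

lemma scale_r: "cl_mult (CL a0 a1 a2 a3 a4 a5 a6 a7) (CL (b0/s) (b1/s) (b2/s) (b3/s) (b4/s) (b5/s) (b6/s) (b7/s))
  = (case cl_mult (CL a0 a1 a2 a3 a4 a5 a6 a7) (CL b0 b1 b2 b3 b4 b5 b6 b7) of CL r0 r1 r2 r3 r4 r5 r6 r7 \<Rightarrow>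
     CL (r0/s) (r1/s) (r2/s) (r3/s) (r4/s) (r5/s) (r6/s) (r7/s))"
  unfolding mult_CL by (simp add: add_divide_distrib diff_divide_distrib times_divide_eq_right)
lemma scale_l: "cl_mult (CL (b0/s) (b1/s) (b2/s) (b3/s) (b4/s) (b5/s) (b6/s) (b7/s)) (CL a0 a1 a2 a3 a4 a5 a6 a7)
  = (case cl_mult (CL b0 b1 b2 b3 b4 b5 b6 b7) (CL a0 a1 a2 a3 a4 a5 a6 a7) of CL r0 r1 r2 r3 r4 r5 r6 r7 \<Rightarrow>
     CL (r0/s) (r1/s) (r2/s) (r3/s) (r4/s) (r5/s) (r6/s) (r7/s))"
  unfolding mult_CL by (simp add: add_divide_distrib diff_divide_distrib times_divide_eq_left)

lemma inv_CL:
  assumes "P (CL c0 c1 c2 c3 c4 c5 c6 c7) \<noteq> 0"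
  shows "cl_invertible (CL c0 c1 c2 c3 c4 c5 c6 c7)"
  unfolding cl_invertible_def
  apply (rule exI[of _ "case CL (c0^3 - c0*c1^2 + c0*c2^2 - c0*c3^2 + c0*c4^2 - c0*c5^2 + c0*c6^2 + c0*c7^2 - 2*c1*c6*c7 + 2*c2*c5*c7 - 2*c3*c4*c7) (0 - c0^2*c1 - 2*c0*c6*c7 + c1^3 - c1*c2^2 + c1*c3^2 - c1*c4^2 + c1*c5^2 + c1*c6^2 + c1*c7^2 - 2*c2*c5*c6 + 2*c3*c4*c6) (0 - c0^2*c2 - 2*c0*c5*c7 + c1^2*c2 + 2*c1*c5*c6 - c2^3 + c2*c3^2 - c2*c4^2 - c2*c5^2 - c2*c6^2 + c2*c7^2 + 2*c3*c4*c5) (0 - c0^2*c3 - 2*c0*c4*c7 + c1^2*c3 + 2*c1*c4*c6 - c2^2*c3 - 2*c2*c4*c5 + c3^3 + c3*c4^2 + c3*c5^2 - c3*c6^2 + c3*c7^2) (0 - c0^2*c4 + 2*c0*c3*c7 + c1^2*c4 - 2*c1*c3*c6 - c2^2*c4 + 2*c2*c3*c5 - c3^2*c4 - c4^3 + c4*c5^2 - c4*c6^2 + c4*c7^2) (0 - c0^2*c5 + 2*c0*c2*c7 + c1^2*c5 - 2*c1*c2*c6 + c2^2*c5 - 2*c2*c3*c4 + c3^2*c5 - c4^2*c5 + c5^3 - c5*c6^2 + c5*c7^2) (0 - c0^2*c6 + 2*c0*c1*c7 - c1^2*c6 + 2*c1*c2*c5 - 2*c1*c3*c4 - c2^2*c6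 + c3^2*c6 - c4^2*c6 + c5^2*c6 - c6^3 + c6*c7^2) (0 - c0^2*c7 + 2*c0*c1*c6 - 2*c0*c2*c5 + 2*c0*c3*c4 - c1^2*c7 + c2^2*c7 - c3^2*c7 + c4^2*c7 - c5^2*c7 + c6^2*c7 - c7^3) of CL r0 r1 r2 r3 r4 r5 r6 r7 \<Rightarrow>
     CL (r0/P (CL c0 c1 c2 c3 c4 c5 c6 c7)) (r1/P (CL c0 c1 c2 c3 c4 c5 c6 c7)) (r2/P (CL c0 c1 c2 c3 c4 c5 c6 c7)) (r3/P (CL c0 c1 c2 c3 c4 c5 c6 c7)) (r4/P (CL c0 c1 c2 c3 c4 c5 c6 c7)) (r5/P (CL c0 c1 c2 c3 c4 c5 c6 c7)) (r6/P (CL c0 c1 c2 c3 c4 c5 c6 c7)) (r7/P (CL c0 c1 c2 c3 c4 c5 c6 c7))"])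
  apply (simp only: cl12.case)
  apply (simp only: scale_r scale_l qr ql cl12.case)
  using assms by (simp add: cl_one_def)
lemma basis_vals: "cl_basis 0 = CL 1 0 0 0 0 0 0 0" "cl_basis 1 = CL 0 1 0 0 0 0 0 0"
  "cl_basis 2 = CL 0 0 1 0 0 0 0 0" "cl_basis 3 = CL 0 0 0 1 0 0 0 0"
  by (simp_all add: cl_basis_def cl_of_def)
lemma add_CL: "cl_add (CL a0 a1 a2 a3 a4 a5 a6 a7) (CL b0 b1 b2 b3 b4 b5 b6 b7) = CL (a0+b0) (a1+b1) (a2+b2) (a3+b3) (a4+b4) (a5+b5) (a6+b6) (a7+b7)"
  by (simp add: cl_add_def cl_of_def)
lemma P0: "P c = 0 \<Longrightarrow> N c = 0 \<and> T c = 0"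
proof -
  assume h: "P c = 0"
  have "(N c)^2 = 0 \<and> (T c)^2 = 0" using h zero_le_power2[of "N c"] zero_le_power2[of "T c"]
    unfolding P_def by linarith
  then show ?thesis by simp
qed
lemma noninv: "\<not> cl_invertible c \<Longrightarrow> N c = 0 \<and> T c = 0"
  by (cases c) (metis inv_CL P0)
lemma sq0: "(a::real)^2 = b^2 \<Longrightarrow> a*b = 0 \<Longrightarrow> a = 0 \<and> b = 0"
  by auto
lemma pair0: "(a::real)*c = b*d \<Longrightarrow> a*d + b*c = 0 \<Longrightarrow> (a = 0 \<and> b = 0) \<or> (c = 0 \<and> d = 0)"
proof -
  assume h: "a*c = b*d" "a*d + b*c = 0"
  have "(a^2+b^2)*(c^2+d^2) = (a*c-b*d)^2 + (a*d+b*c)^2" by algebra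
  also have "\<dots> = 0" using h by simp
  finally show ?thesis by (simp add: sum_power2_eq_zero_iff)
qed

theorem lemma5p2:
  fixes a b :: cl12
  assumes "Cim a \<noteq> Cim b" and "Cim a \<noteq> cl_zero" and "Cim b \<noteq> cl_zero"
    and "P (Cim a) = 0" and "P (Cim b) = 0"
  shows "\<exists>t\<in>{0,1,2,3::nat}.
           cl_invertible (cl_add (cl_mult (Cim a) (cl_basis t)) (cl_mult (cl_basis t) (Cim b)))"
proof (rule ccontr)
  assume c: "\<not> ?thesis"
  obtain a0 x1 x2 x3 x4 x5 x6 a7 where ea: "a = CL a0 x1 x2 x3 x4 x5 x6 a7" by (cases a)
  obtain b0 y1 y2 y3 y4 y5 y6 b7 where eb: "b = CL b0 y1 y2 y3 y4 y5 y6 b7" by (cases b)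
  have ca: "Cim a = CL 0 x1 x2 x3 x4 x5 x6 0" by (simp add: ea Cim_def)
  have cb: "Cim b = CL 0 y1 y2 y3 y4 y5 y6 0" by (simp add: eb Cim_def)
  have nx: "x1 \<noteq> 0 \<or> x2 \<noteq> 0 \<or> x3 \<noteq> 0 \<or> x4 \<noteq> 0 \<or> x5 \<noteq> 0 \<or> x6 \<noteq> 0"
    using assms(2) by (auto simp: ca cl_zero_def)
  have ny: "y1 \<noteq> 0 \<or> y2 \<noteq> 0 \<or> y3 \<noteq> 0 \<or> y4 \<noteq> 0 \<or> y5 \<noteq> 0 \<or> y6 \<noteq> 0"
    using assms(3) by (auto simp: cb cl_zero_def)
  have hx: "N (Cim a) = 0 \<and> T (Cim a) = 0" using assms(4) by (rule P0)
  have hy: "N (Cim b) = 0 \<and> T (Cim b) = 0" using assms(5) by (rule P0)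
  have h0: "N (cl_add (cl_mult (Cim a) (cl_basis 0)) (cl_mult (cl_basis 0) (Cim b))) = 0 \<and>
            T (cl_add (cl_mult (Cim a) (cl_basis 0)) (cl_mult (cl_basis 0) (Cim b))) = 0"
    using c by (intro noninv) auto
  have h1: "N (cl_add (cl_mult (Cim a) (cl_basis 1)) (cl_mult (cl_basis 1) (Cim b))) = 0 \<and>
            T (cl_add (cl_mult (Cim a) (cl_basis 1)) (cl_mult (cl_basis 1) (Cim b))) = 0"
    using c by (intro noninv) auto
  have h2: "N (cl_add (cl_mult (Cim a) (cl_basis 2)) (cl_mult (cl_basis 2) (Cim b))) = 0 \<and>
            T (cl_add (cl_mult (Cim a) (cl_basis 2)) (cl_mult (cl_basis 2) (Cim b))) = 0"
    using c by (intro noninv) auto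
  have h3: "N (cl_add (cl_mult (Cim a) (cl_basis 3)) (cl_mult (cl_basis 3) (Cim b))) = 0 \<and>
            T (cl_add (cl_mult (Cim a) (cl_basis 3)) (cl_mult (cl_basis 3) (Cim b))) = 0"
    using c by (intro noninv) auto
  note hs = hx hy h0 h1 h2 h3
  note hs' = hs[unfolded ca cb basis_vals mult_CL add_CL N_def T_def cf.simps]
  have p16: "x1*y1 = x6*y6" "x1*y6 + x6*y1 = 0"
    using hs' by (simp_all add: algebra_simps power2_eq_square)
  have p25: "x2*y2 = x5*y5" "x2*y5 + x5*y2 = 0"
    using hs' by (simp_all add: algebra_simps power2_eq_square)
  have p34: "x3*y3 = x4*y4" "x3*y4 + x4*y3 = 0"
    using hs' by (simp_all add: algebra_simps power2_eq_square)
  have nxe: "x2^2 + x4^2 + x6^2 = x1^2 + x3^2 + x5^2" "x2*x5 = x1*x6 + x3*x4"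
    using hs' by (simp_all add: algebra_simps)
  have nye: "y2^2 + y4^2 + y6^2 = y1^2 + y3^2 + y5^2" "y2*y5 = y1*y6 + y3*y4"
    using hs' by (simp_all add: algebra_simps)
  have q1: "(x1 = 0 \<and> x6 = 0) \<or> (y1 = 0 \<and> y6 = 0)" using pair0 p16 by blast
  have q2: "(x2 = 0 \<and> x5 = 0) \<or> (y2 = 0 \<and> y5 = 0)" using pair0 p25 by blast
  have q3: "(x3 = 0 \<and> x4 = 0) \<or> (y3 = 0 \<and> y4 = 0)" using pair0 p34 by blast
  have A1: "x2=0 \<Longrightarrow> x5=0 \<Longrightarrow> x3=0 \<Longrightarrow> x4=0 \<Longrightarrow> x1=0 \<and> x6=0" using nxe by (intro sq0) auto
  have A2: "x1=0 \<Longrightarrow> x6=0 \<Longrightarrow> x3=0 \<Longrightarrow> x4=0 \<Longrightarrow> x2=0 \<and> x5=0" using nxe by (intro sq0) auto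
  have A3: "x2=0 \<Longrightarrow> x5=0 \<Longrightarrow> x1=0 \<Longrightarrow> x6=0 \<Longrightarrow> x3=0 \<and> x4=0" using nxe by (intro sq0) auto
  have B1: "y2=0 \<Longrightarrow> y5=0 \<Longrightarrow> y3=0 \<Longrightarrow> y4=0 \<Longrightarrow> y1=0 \<and> y6=0" using nye by (intro sq0) auto
  have B2: "y1=0 \<Longrightarrow> y6=0 \<Longrightarrow> y3=0 \<Longrightarrow> y4=0 \<Longrightarrow> y2=0 \<and> y5=0" using nye by (intro sq0) auto
  have B3: "y2=0 \<Longrightarrow> y5=0 \<Longrightarrow> y1=0 \<Longrightarrow> y6=0 \<Longrightarrow> y3=0 \<and> y4=0" using nye by (intro sq0) auto
  show False using q1 q2 q3 A1 A2 A3 B1 B2 B3 nx ny by blast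
qed
end
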